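(* Let $m<M$ be real numbers and let $x_1,\dots,x_n$ be real numbers with $m\le x_i\le M$ for $i=1,\dots,n$, not all equal. Let $m_r=\frac1n\sum_{i=1}^n(x_i-\bar x)^r$ with $\bar x=\frac1n\sum_{i=1}^n x_i$, let $S=\sqrt{m_2}$, and define $\alpha_3=\sqrt{m_3^2/m_2^3}$, $\alpha_4=m_4/m_2^2$ and $q=(M-m)/S$. Then $$\alpha_4-\alpha_3^2\le\frac{q^2}{4}.$$
   Context: $\alpha_3$ (skewness), $\alpha_4$ (kurtosis) and $q$ (studentized range) are as defined in the claim; $m_r$ is the $r$-th central moment of the numbers $x_1,\dots,x_n$. *)

theory Defs
  imports Complex_Main
begin

text \<open>Data x_1..x_n represented as x :: nat => real on indices {1..n}.\<close>

definition mean :: "nat \<Rightarrow> (nat \<Rightarrow> real) \<Rightarrow> real" where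
  "mean n x = (\<Sum>i=1..n. x i) / real n"

definition central_moment :: "nat \<Rightarrow> nat \<Rightarrow> (nat \<Rightarrow> real) \<Rightarrow> real" where
  "central_moment r n x = (\<Sum>i=1..n. (x i - mean n x) ^ r) / real n"

definition std_dev :: "nat \<Rightarrow> (nat \<Rightarrow> real) \<Rightarrow> real" where
  "std_dev n x = sqrt (central_moment 2 n x)"

definition skewness :: "nat \<Rightarrow> (nat \<Rightarrow> real) \<Rightarrow> real" where
  "skewness n x = sqrt ((central_moment 3 n x)^2 / (central_moment 2 n x)^3)"

definition kurtosis :: "nat \<Rightarrow> (nat \<Rightarrow> real) \<Rightarrow> real" where
  "kurtosis n x = central_moment 4 n x / (central_moment 2 n x)^2"

definition studentized_range :: "real \<Rightarrow> real \<Rightarrow> nat \<Rightarrow> (nat \<Rightarrow> real) \<Rightarrow> real" where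
  "studentized_range m M n x = (M - m) / std_dev n x"

end

theory Submission
  imports Defs
begin

theorem corollary2p5:
  fixes m M :: real and n :: nat and x :: "nat \<Rightarrow> real"
  assumes "m < M"
    and "\<And>i. i \<in> {1..n} \<Longrightarrow> m \<le> x i \<and> x i \<le> M"
    and "\<exists>i\<in>{1..n}. \<exists>j\<in>{1..n}. x i \<noteq> x j"
  shows "kurtosis n x - (skewness n x)^2 \<le> (studentized_range m M n x)^2 / 4"
proof -
  define mu where "mu = mean n x"
  define A where "A r = (\<Sum>i=1..n. (x i - mu) ^ r)" for r :: nat
  obtain i j where ij: "i \<in> {1..n}" "j \<in> {1..n}" "x i \<noteq> x j" using assms(3) by blast
  have npos: "n > 0" using ij by auto
  have cm: "central_moment r n x = A r / real n" for r
    by (simp add: central_moment_def A_def mu_def)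
  have A2pos: "A 2 > 0"
  proof -
    have "x i - mu \<noteq> 0 \<or> x j - mu \<noteq> 0" using ij by auto
    then obtain k where k: "k \<in> {1..n}" "(x k - mu)^2 > 0" using ij by auto
    have "(x k - mu)^2 \<le> A 2" unfolding A_def
      by (rule member_le_sum) (use k in auto)
    thus ?thesis using k by linarith
  qed
  define a where "a = m - mu"
  define b where "b = M - mu"
  have A1: "A 1 = 0"
    using npos by (simp add: A_def mu_def mean_def sum_subtractf)
  have pt: "0 \<le> ((x k - mu) - a) * (b - (x k - mu)) * (x k - mu)^2" if "k \<in> {1..n}" for k
    using assms(2)[OF that] by (simp add: a_def b_def)
  have "0 \<le> (\<Sum>k=1..n. ((x k - mu) - a) * (b - (x k - mu)) * (x k - mu)^2)"
    using pt by (intro sum_nonneg) auto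
  also have "\<dots> = (a+b) * A 3 - A 4 - a*b * A 2"
    unfolding A_def
    by (simp add: algebra_simps power2_eq_square power3_eq_cube power4_eq_xxxx
        sum.distrib sum_subtractf sum_distrib_left)
  finally have key: "A 4 \<le> (a+b) * A 3 - a*b * A 2" by linarith
  have main: "A 4 * A 2 - (A 3)^2 \<le> (M - m)^2 * (A 2)^2 / 4"
  proof -
    have h1: "A 4 * A 2 \<le> ((a+b) * A 3 - a*b * A 2) * A 2"
      using key A2pos by (simp add: mult_right_mono)
    have h2: "0 \<le> (A 3 - (a+b) * A 2 / 2)^2" by simp
    have e2: "(A 3 - (a+b) * A 2 / 2)^2 = (A 3)^2 - (a+b) * A 3 * A 2 + ((a+b) * A 2)^2 / 4"
      by (simp add: power2_eq_square field_simps)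
    have e3: "((a+b) * A 2)^2 / 4 - a*b*A 2 * A 2 = (b - a)^2 * (A 2)^2 / 4"
      by (simp add: power2_eq_square field_simps)
    have e1: "((a+b) * A 3 - a*b * A 2) * A 2 = (a+b) * A 3 * A 2 - a*b*A 2 * A 2"
      by (simp add: algebra_simps)
    have "A 4 * A 2 - (A 3)^2 \<le> (b - a)^2 * (A 2)^2 / 4"
      using h1 h2 e1 e2 e3 by linarith
    moreover have "M - m = b - a" by (simp add: a_def b_def)
    ultimately show ?thesis by simp
  qed
  define c2 where "c2 = A 2 / real n"
  have c2pos: "c2 > 0" using A2pos npos by (simp add: c2_def)
  have sk: "(skewness n x)^2 = (A 3 / real n)^2 / c2^3"
    unfolding skewness_def cm c2_def[symmetric]
    using c2pos by simp
  have sq: "(studentized_range m M n x)^2 = (M-m)^2 / c2"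
    unfolding studentized_range_def std_dev_def cm c2_def[symmetric]
    using c2pos by (simp add: power_divide)
  have ku: "kurtosis n x = (A 4 / real n) / c2^2"
    unfolding kurtosis_def cm c2_def[symmetric] by simp
  have "(A 4 / real n) / c2^2 - (A 3 / real n)^2 / c2^3 \<le> (M-m)^2 / c2 / 4"
  proof -
    have e: "A 4 / real n = A 4 * c2 / A 2" "A 3 / real n = A 3 * c2 / A 2"
      using A2pos npos by (simp_all add: c2_def)
    have "(A 4 / real n) / c2^2 - (A 3 / real n)^2 / c2^3
          = (A 4 * A 2 - (A 3)^2) / (A 2 ^ 2 * c2)"
      unfolding e using A2pos c2pos
      by (simp add: field_simps power2_eq_square power3_eq_cube)
    also have "\<dots> \<le> (M - m)^2 * (A 2)^2 / 4 / (A 2 ^ 2 * c2)"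
      using main A2pos c2pos by (intro divide_right_mono) auto
    also have "\<dots> = (M-m)^2 / c2 / 4" using A2pos by simp
    finally show ?thesis .
  qed
  thus ?thesis using sk sq ku by simp
qed

end
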